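(* Let $f,g\in H^2(\mathbb D)$ be such that $|g(x)|=|f(x)|$ for all $x\in(-1,1)$ and $|g(z)|=|f(z)|$ for all $z\in e^{i\theta}(-1,1)$, where $\theta\notin\pi\mathbb Q$. Then $g=cf$ for some $c\in\mathbb C$ with $|c|=1$.
   Context: $\mathbb D$ is the open unit disc and $H^2(\mathbb D)$ the Hardy space of holomorphic $F$ on $\mathbb D$ with $\sup_{0\le r<1}\frac1{2\pi}\int_{-\pi}^{\pi}|F(re^{i\theta})|^2\,\mathrm d\theta<\infty$. $e^{i\theta}(-1,1)=\{te^{i\theta}:t\in(-1,1)\}$. *)

theory Defs
  imports "HOL-Complex_Analysis.Complex_Analysis"
begin

definition hardy2 :: "(complex \<Rightarrow> complex) set" where
  "hardy2 = {F. F holomorphic_on ball 0 1 \<and>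
     (\<exists>B. \<forall>r. 0 \<le> r \<and> r < 1 \<longrightarrow>
        (1 / (2 * pi)) * integral {-pi..pi} (\<lambda>t. (cmod (F (of_real r * cis t)))\<^sup>2) \<le> B)}"

end

theory Submission
  imports Defs
begin

lemma ident_open:
  fixes f :: "complex \<Rightarrow> complex"
  assumes "f holomorphic_on ball a r" "open V" "V \<subseteq> ball a r" "\<xi> \<in> V"
    "\<And>z. z \<in> V \<Longrightarrow> f z = 0" "w \<in> ball a r"
  shows "f w = 0"
  by (rule analytic_continuation[OF assms(1) open_ball connected_ball assms(3) _ open_imp_islimpt[OF assms(2,4)] assms(5,6)])
     (use assms in auto)

lemma domain_hol:
  fixes f g :: "complex \<Rightarrow> complex"
  assumes hf: "f holomorphic_on ball 0 1" and hg: "g holomorphic_on ball 0 1"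
    and fg: "\<And>z. z \<in> ball 0 1 \<Longrightarrow> f z * g z = 0"
    and nf: "z1 \<in> ball 0 1" "f z1 \<noteq> 0"
  shows "\<forall>z\<in>ball 0 1. g z = 0"
proof -
  have "continuous_on (ball 0 1) f" using hf by (rule holomorphic_on_imp_continuous_on)
  then have "isCont f z1" using nf(1) by (simp add: continuous_on_eq_continuous_at)
  from continuous_at_avoid[OF this nf(2)] obtain d where d: "d > 0" "\<And>y. dist z1 y < d \<Longrightarrow> f y \<noteq> 0"
    by auto
  define V where "V = ball z1 d \<inter> ball 0 1"
  have V: "open V" "V \<subseteq> ball 0 1" "z1 \<in> V" using d nf by (auto simp: V_def)
  have gV: "g z = 0" if "z \<in> V" for z
  proof -
    have "f z \<noteq> 0" using d(2)[of z] that by (simp add: V_def)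
    moreover have "f z * g z = 0" using fg that by (simp add: V_def)
    ultimately show ?thesis by simp
  qed
  show ?thesis
  proof
    fix w :: complex assume "w \<in> ball 0 1"
    then show "g w = 0" using ident_open[OF hg V gV] by simp
  qed
qed




lemma ident_seg:
  fixes f :: "complex \<Rightarrow> complex"
  assumes "f holomorphic_on ball 0 1" "cmod u = 1"
    "\<And>t::real. -1 < t \<Longrightarrow> t < 1 \<Longrightarrow> f (of_real t * u) = 0" "w \<in> ball 0 1"
  shows "f w = 0"
proof (rule analytic_continuation[OF assms(1) open_ball connected_ball])
  let ?U = "{of_real t * u | t. -1 < t \<and> t < 1}"
  show "?U \<subseteq> ball 0 1" using assms(2) by (auto simp: norm_mult)
  show "0 \<in> ball (0::complex) 1" by simp
  show "0 islimpt ?U"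
  proof (rule islimpt_approachable[THEN iffD2], intro allI impI)
    fix e :: real assume e: "0 < e"
    define t where "t = min (e/2) (1/2)"
    have t: "0 < t" "t < 1" "-1 < t" "t < e" using e by (auto simp: t_def)
    show "\<exists>x'\<in>?U. x' \<noteq> 0 \<and> dist x' 0 < e"
    proof (rule bexI[of _ "of_real t * u"])
      show "of_real t * u \<in> ?U" using t by blast
      have "cmod (of_real t * u) = t" using t assms(2) by (simp add: norm_mult)
      then show "of_real t * u \<noteq> 0 \<and> dist (of_real t * u) 0 < e" using t by auto
    qed
  qed
  show "\<And>z. z \<in> ?U \<Longrightarrow> f z = 0" using assms(3) by auto
qed (use assms in auto)




lemma hol_refl:
  fixes f :: "complex \<Rightarrow> complex"
  assumes "f holomorphic_on ball 0 1" "cmod u = 1"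
  shows "(\<lambda>z. cnj (f (u * cnj z))) holomorphic_on ball 0 1"
proof -
  have "(\<lambda>z. f (u * z)) holomorphic_on ball 0 1"
    by (rule holomorphic_on_compose_gen[where g=f and t="ball 0 1", unfolded o_def])
       (use assms in \<open>auto intro!: holomorphic_intros simp: norm_mult\<close>)
  then have "(\<lambda>z. f (u * z)) holomorphic_on cnj ` ball 0 1"
    by (metis (no_types, lifting) holomorphic_on_subset image_subset_iff mem_ball_0 complex_mod_cnj)
  from holomorphic_on_compose_cnj_cnj[OF this open_ball] show ?thesis by (simp add: o_def)
qed




lemma factor0:
  fixes f :: "complex \<Rightarrow> complex"
  assumes hf: "f holomorphic_on ball 0 1" and nf: "z1 \<in> ball 0 1" "f z1 \<noteq> 0"
  obtains F r m where "0 < r" "r \<le> 1" "F holomorphic_on ball 0 r"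
     "\<And>w. w \<in> ball 0 r \<Longrightarrow> f w = w^m * F w" "\<And>w. w \<in> ball 0 r \<Longrightarrow> F w \<noteq> 0"
proof (cases "f 0 = 0")
  case True
  have "\<not> f constant_on ball 0 1"
  proof
    assume "f constant_on ball 0 1"
    then obtain c where c: "\<And>z. z \<in> ball 0 1 \<Longrightarrow> f z = c" by (auto simp: constant_on_def)
    have "f 0 = c" by (rule c) simp
    moreover have "f z1 = c" by (rule c[OF nf(1)])
    ultimately show False using True nf(2) by simp
  qed
  obtain g r n where A: "0 < n" "0 < r" "ball 0 r \<subseteq> ball (0::complex) 1" "g holomorphic_on ball 0 r"
     "\<And>w. w \<in> ball 0 r \<Longrightarrow> f w = (w - 0)^n * g w" "\<And>w. w \<in> ball 0 r \<Longrightarrow> g w \<noteq> 0"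
    by (rule holomorphic_factor_zero_nonconstant[OF hf open_ball connected_ball _ True \<open>\<not> f constant_on ball 0 1\<close>]) auto
  have "r \<le> 1"
  proof (rule ccontr)
    assume "\<not> r \<le> 1"
    then have "(1::complex) \<in> ball 0 r" by simp
    with A(3) show False by (metis subsetD mem_ball_0 norm_one less_irrefl)
  qed
  with A show ?thesis using that[of r g n] by auto
next
  case False
  have "continuous_on (ball 0 1) f" using hf by (rule holomorphic_on_imp_continuous_on)
  then have "isCont f 0" by (simp add: continuous_on_eq_continuous_at)
  from continuous_at_avoid[OF this False] obtain d where d: "d > 0" "\<And>y. dist 0 y < d \<Longrightarrow> f y \<noteq> 0"
    by auto
  define r where "r = min d 1"
  have "0 < r" "r \<le> 1" using d by (auto simp: r_def)
  moreover have "ball 0 r \<subseteq> ball (0::complex) 1" by (rule subset_ball) (simp add: r_def)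
  then have "f holomorphic_on ball 0 r" using hf holomorphic_on_subset by metis
  moreover have "\<And>w. w \<in> ball 0 r \<Longrightarrow> f w = w^0 * f w" by simp
  moreover have "\<And>w. w \<in> ball 0 r \<Longrightarrow> f w \<noteq> 0" using d by (auto simp: r_def dist_norm)
  ultimately show ?thesis using that[of r f 0] by blast
qed




lemma rho_ne:
  fixes \<theta> :: real and n m :: nat
  assumes "\<theta> / pi \<notin> \<rat>" "n \<noteq> m"
  shows "cis (2*\<theta>) ^ n \<noteq> cis (2*\<theta>) ^ m"
proof
  assume "cis (2*\<theta>) ^ n = cis (2*\<theta>) ^ m"
  then have "cis (real n * (2*\<theta>)) = cis (real m * (2*\<theta>))" using Complex.DeMoivre[of "2*\<theta>" n] Complex.DeMoivre[of "2*\<theta>" m] by simp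
  then have "cis (real n * (2*\<theta>)) / cis (real m * (2*\<theta>)) = 1" by (simp add: cis_neq_zero)
  then have "cis ((real n - real m) * (2*\<theta>)) = 1" by (simp add: cis_divide left_diff_distrib)
  then have "exp (\<i> * complex_of_real ((real n - real m) * (2*\<theta>))) = 1" by (simp add: cis_conv_exp)
  then obtain k :: int where k: "(real n - real m) * (2*\<theta>) = of_int (2*k) * pi"
    by (auto simp: exp_eq_1)
  have nz: "real n - real m \<noteq> 0" using assms(2) by simp
  have "\<theta> / pi = of_int k / (real n - real m)"
    using k nz by (simp add: field_simps)
  also have "\<dots> \<in> \<rat>" using Rats_of_int Rats_of_nat Rats_diff Rats_divide
    by (metis of_int_of_nat_eq)
  finally show False using assms(1) by simp
qed

theorem lemma4p4:
  fixes f g :: "complex \<Rightarrow> complex" and \<theta> :: real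
  assumes "f \<in> hardy2" and "g \<in> hardy2"
    and "\<And>x::real. -1 < x \<Longrightarrow> x < 1 \<Longrightarrow> cmod (g (of_real x)) = cmod (f (of_real x))"
    and "\<And>t::real. -1 < t \<Longrightarrow> t < 1 \<Longrightarrow>
           cmod (g (of_real t * cis \<theta>)) = cmod (f (of_real t * cis \<theta>))"
    and "\<theta> / pi \<notin> \<rat>"
  shows "\<exists>c. cmod c = 1 \<and> (\<forall>z\<in>ball 0 1. g z = c * f z)"
proof -
  have holf: "f holomorphic_on ball 0 1" using assms(1) by (simp add: hardy2_def)
  have holg: "g holomorphic_on ball 0 1" using assms(2) by (simp add: hardy2_def)
  define \<rho> where "\<rho> = cis (2*\<theta>)"
  have n\<rho>: "cmod \<rho> = 1" by (simp add: \<rho>_def)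
  have n1: "cmod (1::complex) = 1" by simp
  have nth: "cmod (cis \<theta>) = 1" by simp
  have sq: "z * cnj z = complex_of_real ((cmod z)^2)" for z :: complex
    by (rule Complex.complex_norm_square[symmetric])
  have eq1: "g z * cnj (g (1 * cnj z)) = f z * cnj (f (1 * cnj z))" if z: "z \<in> ball 0 1" for z
  proof -
    have "(\<lambda>z. g z * cnj (g (1 * cnj z)) - f z * cnj (f (1 * cnj z))) z = 0"
    proof (rule ident_seg[OF _ n1 _ z])
      show "(\<lambda>z. g z * cnj (g (1 * cnj z)) - f z * cnj (f (1 * cnj z))) holomorphic_on ball 0 1"
        by (intro holomorphic_on_diff holomorphic_on_mult holf holg hol_refl[OF holf n1] hol_refl[OF holg n1])
      fix t :: real assume t: "-1 < t" "t < 1"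
      have "g (of_real t) * cnj (g (of_real t)) = f (of_real t) * cnj (f (of_real t))"
        unfolding sq using assms(3)[OF t] by simp
      then show "g (of_real t * 1) * cnj (g (1 * cnj (of_real t * 1))) -
           f (of_real t * 1) * cnj (f (1 * cnj (of_real t * 1))) = 0" by simp
    qed
    then show ?thesis by simp
  qed
  have rot: "\<rho> * cnj (of_real t * cis \<theta>) = of_real t * cis \<theta>" for t :: real
  proof -
    have "cis (2*\<theta>) * cis (-\<theta>) = cis \<theta>" by (simp add: cis_mult)
    then show ?thesis by (simp add: \<rho>_def cis_cnj algebra_simps)
  qed
  have eq2: "g z * cnj (g (\<rho> * cnj z)) = f z * cnj (f (\<rho> * cnj z))" if z: "z \<in> ball 0 1" for z
  proof -
    have "(\<lambda>z. g z * cnj (g (\<rho> * cnj z)) - f z * cnj (f (\<rho> * cnj z))) z = 0"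
    proof (rule ident_seg[OF _ nth _ z])
      show "(\<lambda>z. g z * cnj (g (\<rho> * cnj z)) - f z * cnj (f (\<rho> * cnj z))) holomorphic_on ball 0 1"
        by (intro holomorphic_on_diff holomorphic_on_mult holf holg hol_refl[OF holf n\<rho>] hol_refl[OF holg n\<rho>])
      fix t :: real assume t: "-1 < t" "t < 1"
      let ?x = "of_real t * cis \<theta>"
      have "g ?x * cnj (g ?x) = f ?x * cnj (f ?x)"
        unfolding sq using assms(4)[OF t] by simp
      then show "g ?x * cnj (g (\<rho> * cnj ?x)) - f ?x * cnj (f (\<rho> * cnj ?x)) = 0"
        unfolding rot by simp
    qed
    then show ?thesis by simp
  qed
  show ?thesis
  proof (cases "\<forall>z\<in>ball 0 1. f z = 0")
    case True
    have "g z = 0" if z: "z \<in> ball 0 1" for z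
    proof (rule ident_seg[OF holg n1 _ z])
      fix t :: real assume t: "-1 < t" "t < 1"
      have "of_real t \<in> ball (0::complex) 1" using t by simp
      then have "f (of_real t) = 0" using True by blast
      then show "g (of_real t * 1) = 0" using assms(3)[OF t] by simp
    qed
    then show ?thesis using True by (intro exI[of _ 1]) simp
  next
    case False
    then obtain z1 where z1: "z1 \<in> ball 0 1" "f z1 \<noteq> 0" by blast
    have fx: "\<exists>t::real. -1 < t \<and> t < 1 \<and> f (of_real t) \<noteq> 0"
    proof (rule ccontr)
      assume "\<not> ?thesis"
      then have "f z1 = 0"
        by (intro ident_seg[OF holf n1 _ z1(1)]) auto
      with z1 show False by simp
    qed
    have g_nz: "\<exists>z3\<in>ball 0 1. f z3 * g z3 \<noteq> 0"
    proof (rule ccontr)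
      assume "\<not> ?thesis"
      then have "\<forall>z\<in>ball 0 1. g z = 0"
        by (intro domain_hol[OF holf holg _ z1]) auto
      moreover obtain t :: real where t: "-1 < t" "t < 1" "f (of_real t) \<noteq> 0" using fx by blast
      moreover have "of_real t \<in> ball (0::complex) 1" using t by simp
      ultimately show False using assms(3)[OF t(1,2)] by simp
    qed
    then obtain z3 where z3: "z3 \<in> ball 0 1" "f z3 * g z3 \<noteq> 0" by blast
    define A where "A w = g w * f (\<rho> * w) - f w * g (\<rho> * w)" for w
    define A' where "A' z = cnj (g (1 * cnj z)) * cnj (f (\<rho> * cnj z)) - cnj (f (1 * cnj z)) * cnj (g (\<rho> * cnj z))" for z
    have holA': "A' holomorphic_on ball 0 1"
      unfolding A'_def
      by (intro holomorphic_on_diff holomorphic_on_mult hol_refl[OF holf n1] hol_refl[OF holg n1]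
          hol_refl[OF holf n\<rho>] hol_refl[OF holg n\<rho>])
    have holfg: "(\<lambda>z. f z * g z) holomorphic_on ball 0 1"
      by (intro holomorphic_on_mult holf holg)
    have key: "f z * g z * A' z = 0" if z: "z \<in> ball 0 1" for z
    proof -
      have "f z * g z * A' z = (f z * cnj (f (\<rho> * cnj z))) * (g z * cnj (g (1 * cnj z)))
               - (f z * cnj (f (1 * cnj z))) * (g z * cnj (g (\<rho> * cnj z)))"
        by (simp add: A'_def algebra_simps)
      also have "\<dots> = 0" using eq1[OF z] eq2[OF z] by simp
      finally show ?thesis .
    qed
    have A'0: "\<forall>z\<in>ball 0 1. A' z = 0"
      by (rule domain_hol[OF holfg holA' key z3])
    have A0: "A w = 0" if w: "w \<in> ball 0 1" for w
    proof -
      have "cnj w \<in> ball 0 1" using w by simp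
      then have "A' (cnj w) = 0" using A'0 by blast
      moreover have "A' (cnj w) = cnj (A w)" by (simp add: A'_def A_def)
      ultimately show ?thesis by simp
    qed
    obtain F r m where r: "0 < r" "r \<le> 1" and holF: "F holomorphic_on ball 0 r"
      and fF: "\<And>w. w \<in> ball 0 r \<Longrightarrow> f w = w^m * F w" and Fnz: "\<And>w. w \<in> ball 0 r \<Longrightarrow> F w \<noteq> 0"
      using factor0[OF holf z1] by metis
    have sub: "ball 0 r \<subseteq> ball (0::complex) 1" by (rule subset_ball) (rule r(2))
    have \<rho>ball: "\<rho> * w \<in> ball 0 r" if "w \<in> ball 0 r" for w
      using that n\<rho> by (simp add: norm_mult)
    define H where "H w = g w / F w" for w
    have holg_r: "g holomorphic_on ball 0 r" using holomorphic_on_subset[OF holg sub] .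
    have holH: "H holomorphic_on ball 0 r"
      unfolding H_def by (intro holomorphic_on_divide holg_r holF) (use Fnz in auto)
    have HR1: "H (\<rho> * w) = \<rho>^m * H w" if w: "w \<in> ball 0 r" "w \<noteq> 0" for w
    proof -
      have w1: "w \<in> ball 0 1" using w sub by blast
      have "g w * f (\<rho> * w) = f w * g (\<rho> * w)" using A0[OF w1] by (simp add: A_def)
      then have "w^m * (g w * \<rho>^m * F (\<rho> * w)) = w^m * (F w * g (\<rho> * w))"
        using fF[OF w(1)] fF[OF \<rho>ball[OF w(1)]] by (simp add: power_mult_distrib algebra_simps)
      moreover have "w^m \<noteq> 0" using w by simp
      ultimately have e: "g w * \<rho>^m * F (\<rho> * w) = F w * g (\<rho> * w)" using w(2) by simp
      have "F w \<noteq> 0" "F (\<rho> * w) \<noteq> 0" using Fnz w(1) Fnz[OF \<rho>ball[OF w(1)]] by auto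
      with e show ?thesis by (simp add: H_def field_simps)
    qed
    have holH\<rho>: "(\<lambda>w. H (\<rho> * w)) holomorphic_on ball 0 r"
      by (rule holomorphic_on_compose_gen[where g=H and t="ball 0 r", unfolded o_def])
         (intro holomorphic_intros, rule holH, use \<rho>ball in blast)
    have HR: "H (\<rho> * w) = \<rho>^m * H w" if w: "w \<in> ball 0 r" for w
    proof -
      have "(\<lambda>w. H (\<rho> * w) - \<rho>^m * H w) w = 0"
      proof (rule ident_open[of "\<lambda>w. H (\<rho> * w) - \<rho>^m * H w" 0 r "ball 0 r - {0}" "of_real (r/2)"])
        show "(\<lambda>w. H (\<rho> * w) - \<rho>^m * H w) holomorphic_on ball 0 r"
          by (intro holomorphic_on_diff holomorphic_on_mult holH\<rho> holH holomorphic_on_const)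
        show "open (ball (0::complex) r - {0})" by (simp add: open_Diff)
        show "ball 0 r - {0} \<subseteq> ball (0::complex) r" by blast
        show "complex_of_real (r / 2) \<in> ball 0 r - {0}" using r(1) by simp
        show "\<And>z. z \<in> ball 0 r - {0} \<Longrightarrow> H (\<rho> * z) - \<rho> ^ m * H z = 0" using HR1 by simp
        show "w \<in> ball 0 r" by (rule w)
      qed
      then show ?thesis by simp
    qed
    define D where "D n = (deriv ^^ n) H 0" for n
    have D0: "D n = 0" if "n \<noteq> m" for n
    proof -
      have 0: "(0::complex) \<in> ball 0 r" using r(1) by simp
      have "(deriv ^^ n) (\<lambda>w. H (\<rho> * w)) 0 = \<rho>^n * (deriv ^^ n) H (\<rho> * 0)"
        by (rule higher_deriv_compose_linear[OF holH open_ball open_ball 0 \<rho>ball])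
      moreover have "(deriv ^^ n) (\<lambda>w. \<rho>^m * H w) 0 = \<rho>^m * (deriv ^^ n) H 0"
        by (rule higher_deriv_cmult[OF holH 0 open_ball])
      moreover have "(deriv ^^ n) (\<lambda>w. H (\<rho> * w)) 0 = (deriv ^^ n) (\<lambda>w. \<rho>^m * H w) 0"
      proof (rule higher_deriv_cong_ev)
        show "\<forall>\<^sub>F x in nhds 0. H (\<rho> * x) = \<rho> ^ m * H x"
          unfolding eventually_nhds using HR 0 by (intro exI[of _ "ball 0 r"]) auto
      qed simp
      ultimately have "(\<rho>^n - \<rho>^m) * D n = 0" by (simp add: D_def algebra_simps)
      moreover have "\<rho>^n \<noteq> \<rho>^m" unfolding \<rho>_def by (rule rho_ne[OF assms(5) that])
      ultimately show ?thesis by simp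
    qed
    define c where "c = D m / fact m"
    have Hw: "H w = c * w^m" if w: "w \<in> ball 0 r" for w
    proof -
      have s1: "(\<lambda>n. D n / fact n * (w - 0)^n) sums H w"
        unfolding D_def by (rule holomorphic_power_series[OF holH w])
      have "(\<lambda>n. D n / fact n * (w - 0)^n) = (\<lambda>n. if n = m then c * w^m else 0)"
        using D0 by (auto simp: c_def)
      moreover have "(\<lambda>n. if n = m then c * w^m else 0) sums (c * w^m)"
        by (rule sums_single)
      ultimately show ?thesis using s1 sums_unique2 by metis
    qed
    have gcf_r: "g w - c * f w = 0" if w: "w \<in> ball 0 r" for w
    proof -
      have "g w = H w * F w" using Fnz[OF w] by (simp add: H_def)
      then show ?thesis using Hw[OF w] fF[OF w] by simp
    qed
    have gcf: "g z = c * f z" if z: "z \<in> ball 0 1" for z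
    proof -
      have "(\<lambda>z. g z - c * f z) z = 0"
      proof (rule ident_open[OF _ open_ball sub _ gcf_r z])
        show "(\<lambda>z. g z - c * f z) holomorphic_on ball 0 1"
          by (intro holomorphic_on_diff holomorphic_on_mult holf holg holomorphic_on_const)
        show "0 \<in> ball (0::complex) r" using r(1) by simp
      qed
      then show ?thesis by simp
    qed
    obtain t :: real where t: "-1 < t" "t < 1" "f (of_real t) \<noteq> 0" using fx by blast
    have "of_real t \<in> ball (0::complex) 1" using t by simp
    then have "cmod (f (of_real t)) = cmod c * cmod (f (of_real t))"
      using assms(3)[OF t(1,2)] gcf by (simp add: norm_mult)
    then have "cmod c = 1" using t(3) by simp
    then show ?thesis using gcf by blast
  qed
qed

end
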